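(* Let $(M,g)$ be a Riemannian manifold of dimension $n$, with the objects $\mathcal{T}M$, $V$, $G$, $\xi_1,\xi_2$, $\omega^1,\omega^2$, $f$ as described in the context (on the open subset of $\mathcal{T}M$ where $F^2+K^2>0$). Let $V_{\xi_2}=\{X\in V:\ \omega^2(X)=0\}$ be the vertical Liouville distribution (the $G$-orthogonal complement of $\xi_2$ in $V$, of rank $2n-1$), let $\overline{f}$ be the restriction of $f$ to $V_{\xi_2}$ (which takes values in $V_{\xi_2}$), let $\overline{\xi}=\xi_1$ (a section of $V_{\xi_2}$) and $\overline{\eta}=\omega^1|_{V_{\xi_2}}$. Then $(\overline{f},\overline{\xi},\overline{\eta})$ is an almost contact structure on $V_{\xi_2}$; more precisely: (i) $\overline{f}^3+\overline{f}=0$ and $\operatorname{rank}\overline{f}=2n-2$; (ii) $\overline{\eta}(\overline{\xi})=1$, $\overline{f}(\overline{\xi})=0$, $\overline{\eta}\circ\overline{f}=0$; (iii) $\overline{f}^2(X)=-X+\overline{\eta}(X)\overline{\xi}$ for every $X\in\Gamma(V_{\xi_2})$.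
   Context: Let $M$ be an $n$-dimensional smooth manifold with a Riemannian metric $g=(g_{ij})$, with inverse matrix $(g^{ij})$; summation convention is used. The big-tangent manifold $\mathcal{T}M$ is the total space of the Whitney sum $TM\oplus T^*M\to M$; over a chart $(U,(x^i))$ of $M$ it has coordinates $(x^i,y^i,p_i)$, the point being $y^i\frac{\partial}{\partial x^i}|_x+p_i\,dx^i|_x$. The vertical bundle $V\subset T\mathcal{T}M$ is the subbundle tangent to the fibres of $\mathcal{T}M\to M$, locally spanned by $\{\frac{\partial}{\partial y^i},\frac{\partial}{\partial p_i}\}$. Put $y_i=g_{ij}y^j$, $p^i=g^{ij}p_j$, $F^2=g_{ij}y^iy^j$, $K^2=g^{ij}p_ip_j$; all objects are considered on the open set where $F^2+K^2>0$. $G$ is the metric on $V$ with $G(\frac{\partial}{\partial y^i},\frac{\partial}{\partial y^j})=g_{ij}$, $G(\frac{\partial}{\partial p_i},\frac{\partial}{\partial p_j})=g^{ij}$, $G(\frac{\partial}{\partial y^i},\frac{\partial}{\partial p_j})=0$. $\phi:V\to V$ is the bundle endomorphism with $\phi(\frac{\partial}{\partial y^i})=-g_{ij}\frac{\partial}{\partial p_j}$, $\phi(\frac{\partial}{\partial p_i})=g^{ij}\frac{\partial}{\partial y^j}$. Set $\xi_2=\frac{1}{\sqrt{F^2+K^2}}\big(y^i\frac{\partial}{\partial y^i}+p_i\frac{\partial}{\partial p_i}\big)$ and $\xi_1=\frac{1}{\sqrt{F^2+K^2}}\big(p^i\frac{\partial}{\partial y^i}-y_i\frac{\partial}{\partial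 p_i}\big)$. Let $\omega^1,\omega^2$ be the sections of $V^*$ given by $\omega^1(\frac{\partial}{\partial y^i})=\frac{p_i}{\sqrt{F^2+K^2}}$, $\omega^1(\frac{\partial}{\partial p_i})=-\frac{y^i}{\sqrt{F^2+K^2}}$, $\omega^2(\frac{\partial}{\partial y^i})=\frac{y_i}{\sqrt{F^2+K^2}}$, $\omega^2(\frac{\partial}{\partial p_i})=\frac{p^i}{\sqrt{F^2+K^2}}$. Define $f:V\to V$ by $f(X)=\phi(X)-\omega^2(X)\xi_1+\omega^1(X)\xi_2$. *)

theory Defs
  imports "HOL-Analysis.Analysis"
begin

text \<open>At a point u = (x,y,p) of the big-tangent manifold, the vertical
space V_u is identified with pairs (a,b) of coefficient vectors, X = a^i d/dy^i + b_i d/dp_i.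
g is the matrix (g_ij(x)), its inverse is (g^ij(x)).\<close>

type_synonym 'n vert = "(real^'n) \<times> (real^'n)"

definition ginv :: "real^'n^'n \<Rightarrow> real^'n^'n" where
  "ginv g = matrix_inv g"

definition FK2 :: "real^'n^'n \<Rightarrow> real^'n \<Rightarrow> real^'n \<Rightarrow> real" where
  "FK2 g y p = y \<bullet> (g *v y) + p \<bullet> (ginv g *v p)"

definition phiV :: "real^'n^'n \<Rightarrow> 'n vert \<Rightarrow> 'n vert" where
  "phiV g X = (ginv g *v snd X, - (g *v fst X))"

definition xi1 :: "real^'n^'n \<Rightarrow> real^'n \<Rightarrow> real^'n \<Rightarrow> 'n vert" where
  "xi1 g y p = (1 / sqrt (FK2 g y p)) *\<^sub>R (ginv g *v p, - (g *v y))"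

definition xi2 :: "real^'n^'n \<Rightarrow> real^'n \<Rightarrow> real^'n \<Rightarrow> 'n vert" where
  "xi2 g y p = (1 / sqrt (FK2 g y p)) *\<^sub>R (y, p)"

definition omega1 :: "real^'n^'n \<Rightarrow> real^'n \<Rightarrow> real^'n \<Rightarrow> 'n vert \<Rightarrow> real" where
  "omega1 g y p X = (p \<bullet> fst X - y \<bullet> snd X) / sqrt (FK2 g y p)"

definition omega2 :: "real^'n^'n \<Rightarrow> real^'n \<Rightarrow> real^'n \<Rightarrow> 'n vert \<Rightarrow> real" where
  "omega2 g y p X = ((g *v y) \<bullet> fst X + (ginv g *v p) \<bullet> snd X) / sqrt (FK2 g y p)"

definition fV :: "real^'n^'n \<Rightarrow> real^'n \<Rightarrow> real^'n \<Rightarrow> 'n vert \<Rightarrow> 'n vert" where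
  "fV g y p X = phiV g X - omega2 g y p X *\<^sub>R xi1 g y p + omega1 g y p X *\<^sub>R xi2 g y p"

definition Vxi2 :: "real^'n^'n \<Rightarrow> real^'n \<Rightarrow> real^'n \<Rightarrow> 'n vert set" where
  "Vxi2 g y p = {X. omega2 g y p X = 0}"

end

theory Submission
  imports Defs
begin

lemma ginv_facts:
  fixes g :: "real^'n^'n"
  assumes sym: "transpose g = g"
    and posdef: "\<And>v. v \<noteq> 0 \<Longrightarrow> v \<bullet> (g *v v) > 0"
  shows "g ** ginv g = mat 1" "ginv g ** g = mat 1" "transpose (ginv g) = ginv g"
proof -
  have ker: "\<forall>x. g *v x = 0 \<longrightarrow> x = 0"
    using posdef by (metis inner_zero_right less_irrefl)
  then have "\<exists>B. B ** g = mat 1" using matrix_left_invertible_ker by blast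
  then have inv: "invertible g" using invertible_left_inverse by blast
  then have 1: "g ** ginv g = mat 1 \<and> ginv g ** g = mat 1"
    unfolding ginv_def matrix_inv_def invertible_def by (rule someI_ex)
  then show a: "g ** ginv g = mat 1" "ginv g ** g = mat 1" by auto
  have "transpose (ginv g) ** g = transpose (g ** ginv g)"
    by (simp add: matrix_transpose_mul sym)
  also have "\<dots> = mat 1" using a by (simp add: transpose_mat)
  finally have t: "transpose (ginv g) ** g = mat 1" .
  have "transpose (ginv g) = transpose (ginv g) ** (g ** ginv g)" using a by simp
  also have "\<dots> = (transpose (ginv g) ** g) ** ginv g" by (simp add: matrix_mul_assoc)
  also have "\<dots> = ginv g" using t by simp
  finally show "transpose (ginv g) = ginv g" .
qed

lemma sym_inner:
  fixes A :: "real^'n^'n"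
  assumes "transpose A = A"
  shows "(A *v a) \<bullet> b = a \<bullet> (A *v b)"
proof -
  have "(A *v a) = a v* A" by (metis assms transpose_matrix_vector)
  then show ?thesis by (simp add: dot_lmul_matrix)
qed

theorem theorem5p4:
  fixes g :: "real^'n^'n" and y p :: "real^'n"
  assumes sym: "transpose g = g"
    and posdef: "\<And>v. v \<noteq> 0 \<Longrightarrow> v \<bullet> (g *v v) > 0"
    and pos: "FK2 g y p > 0"
  shows "(\<forall>X\<in>Vxi2 g y p. fV g y p X \<in> Vxi2 g y p)
    \<and> xi1 g y p \<in> Vxi2 g y p
    \<and> (\<forall>X\<in>Vxi2 g y p. fV g y p (fV g y p (fV g y p X)) + fV g y p X = 0)
    \<and> dim (fV g y p ` Vxi2 g y p) = 2 * CARD('n) - 2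
    \<and> omega1 g y p (xi1 g y p) = 1
    \<and> fV g y p (xi1 g y p) = 0
    \<and> (\<forall>X\<in>Vxi2 g y p. omega1 g y p (fV g y p X) = 0)
    \<and> (\<forall>X\<in>Vxi2 g y p. fV g y p (fV g y p X) = - X + omega1 g y p X *\<^sub>R xi1 g y p)"
proof -
  define h where "h = ginv g"
  define s where "s = sqrt (FK2 g y p)"
  have s0: "s > 0" using pos by (simp add: s_def)
  have ss: "s * s = y \<bullet> (g *v y) + p \<bullet> (h *v p)"
    using pos by (simp add: s_def FK2_def h_def flip: power2_eq_square)
  have gh: "\<And>v. g *v (h *v v) = v" and hg: "\<And>v. h *v (g *v v) = v"
    using ginv_facts[OF sym posdef] unfolding h_def
    by (metis matrix_vector_mul_assoc matrix_vector_mul_lid)+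
  have sh: "transpose h = h" using ginv_facts[OF sym posdef] h_def by simp
  have sg': "\<And>a b. (g *v a) \<bullet> b = a \<bullet> (g *v b)" using sym_inner[OF sym] .
  have sh': "\<And>a b. (h *v a) \<bullet> b = a \<bullet> (h *v b)" using sym_inner[OF sh] .
  have sg2: "a \<bullet> (g *v b) = b \<bullet> (g *v a)" for a b by (metis sg' inner_commute)
  have sh2: "a \<bullet> (h *v b) = b \<bullet> (h *v a)" for a b by (metis sh' inner_commute)
  define u1 :: "'n vert" where "u1 = (1/s) *\<^sub>R (p, -y)"
  define u2 :: "'n vert" where "u2 = (1/s) *\<^sub>R (g *v y, h *v p)"
  have w1: "omega1 g y p X = u1 \<bullet> X" for X
    by (cases X) (simp add: omega1_def u1_def s_def diff_divide_distrib)
  have w2: "omega2 g y p X = u2 \<bullet> X" for X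
    by (cases X) (simp add: omega2_def u2_def s_def h_def add_divide_distrib)
  have x1: "xi1 g y p = (1/s) *\<^sub>R (h *v p, - (g *v y))"
    by (simp add: xi1_def s_def h_def)
  have x2: "xi2 g y p = (1/s) *\<^sub>R (y, p)"
    by (simp add: xi2_def s_def)
  have ph: "\<And>a b. phiV g (a, b) = (h *v b, - (g *v a))"
    by (simp add: phiV_def h_def)
  have phiadd: "\<And>X Y c. phiV g (X + c *\<^sub>R Y) = phiV g X + c *\<^sub>R phiV g Y"
    by (simp add: phiV_def split_beta matrix_vector_right_distrib matrix_vector_mult_scaleR)
  have phi2: "phiV g (phiV g X) = - X" for X
    by (cases X) (simp add: ph vec.neg gh hg)
  have phx2: "phiV g (xi2 g y p) = xi1 g y p"
    by (simp add: x2 x1 ph matrix_vector_mult_scaleR)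
  have phx1: "phiV g (xi1 g y p) = - xi2 g y p"
    using phi2[of "xi2 g y p"] phx2 by simp
  have s2: "(1/s) * (1/s) * (y \<bullet> (g *v y) + p \<bullet> (h *v p)) = 1"
    using ss s0 by (simp flip: ss)
  have w1x1: "omega1 g y p (xi1 g y p) = 1"
    using s2 by (simp add: w1 u1_def x1 sh' inner_commute algebra_simps)
  have w2x1: "omega2 g y p (xi1 g y p) = 0"
    by (simp add: w2 u2_def x1 sh' inner_commute algebra_simps)
  have w1x2: "omega1 g y p (xi2 g y p) = 0"
    by (simp add: w1 u1_def x2 inner_commute algebra_simps)
  have w2x2: "omega2 g y p (xi2 g y p) = 1"
    using s2 by (simp add: w2 u2_def x2 sg' inner_commute algebra_simps)
  have w1ph: "omega1 g y p (phiV g X) = omega2 g y p X" for X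
    by (cases X) (simp add: w1 w2 u1_def u2_def ph sg' sh' sg2[of y] sh2[of p] algebra_simps)
  have w2ph: "omega2 g y p (phiV g X) = - omega1 g y p X" for X
    by (cases X) (simp add: w1 w2 u1_def u2_def ph sg' sh' gh hg inner_commute algebra_simps)
  have fdef: "fV g y p X = phiV g X - omega2 g y p X *\<^sub>R xi1 g y p + omega1 g y p X *\<^sub>R xi2 g y p" for X
    by (simp add: fV_def)
  have w1lin: "omega1 g y p (A + c *\<^sub>R B) = omega1 g y p A + c * omega1 g y p B"
     "omega1 g y p (A - c *\<^sub>R B) = omega1 g y p A - c * omega1 g y p B" for A B c
    by (simp_all add: w1 inner_add_right inner_diff_right)
  have w2lin: "omega2 g y p (A + c *\<^sub>R B) = omega2 g y p A + c * omega2 g y p B"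
     "omega2 g y p (A - c *\<^sub>R B) = omega2 g y p A - c * omega2 g y p B" for A B c
    by (simp_all add: w2 inner_add_right inner_diff_right)
  have fV_in: "fV g y p X \<in> Vxi2 g y p" if "X \<in> Vxi2 g y p" for X
    using that by (simp add: Vxi2_def fdef w2lin w2ph w2x1 w2x2)
  have w1f: "omega1 g y p (fV g y p X) = 0" for X
    by (simp add: fdef w1lin w1ph w1x1 w1x2)
  have fx1: "fV g y p (xi1 g y p) = 0"
    by (simp add: fdef phx1 w1x1 w2x1)
  have x1V: "xi1 g y p \<in> Vxi2 g y p" by (simp add: Vxi2_def w2x1)
  have f2: "fV g y p (fV g y p X) = - X + omega1 g y p X *\<^sub>R xi1 g y p"
    if "X \<in> Vxi2 g y p" for X
  proof -
    have "fV g y p (fV g y p X) = phiV g (fV g y p X)"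
      using fV_in[OF that] w1f[of X] by (simp add: fdef[of "fV g y p X"] Vxi2_def)
    also have "\<dots> = phiV g (phiV g X + omega1 g y p X *\<^sub>R xi2 g y p)"
      using that by (simp add: fdef Vxi2_def)
    also have "\<dots> = - X + omega1 g y p X *\<^sub>R xi1 g y p"
      by (simp add: phiadd phi2 phx2)
    finally show ?thesis .
  qed
  have f3: "fV g y p (fV g y p (fV g y p X)) + fV g y p X = 0"
    if "X \<in> Vxi2 g y p" for X
    using f2[OF fV_in[OF that]] w1f[of X] by simp
  define K where "K = {Z. u1 \<bullet> Z = 0 \<and> u2 \<bullet> Z = 0}"
  have img: "fV g y p ` Vxi2 g y p = K"
  proof
    show "fV g y p ` Vxi2 g y p \<subseteq> K"
      using fV_in w1f by (auto simp: K_def Vxi2_def w1 w2)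
  next
    show "K \<subseteq> fV g y p ` Vxi2 g y p"
    proof
      fix Z assume "Z \<in> K"
      then have ZV: "Z \<in> Vxi2 g y p" and Z1: "omega1 g y p Z = 0"
        by (auto simp: K_def Vxi2_def w1 w2)
      have WV: "fV g y p (fV g y p Z) \<in> Vxi2 g y p" using fV_in ZV by blast
      have "fV g y p (fV g y p (fV g y p (fV g y p Z))) = Z"
        using f2[OF WV] w1f[of "fV g y p Z"] f2[OF ZV] Z1 by simp
      moreover have "fV g y p (fV g y p (fV g y p Z)) \<in> Vxi2 g y p" using fV_in WV by blast
      ultimately show "Z \<in> fV g y p ` Vxi2 g y p" by (metis image_eqI)
    qed
  qed
  have a1: "u1 \<bullet> xi1 g y p = 1" "u2 \<bullet> xi1 g y p = 0" "u2 \<bullet> xi2 g y p = 1"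
    using w1x1 w2x1 w2x2 by (simp_all add: w1 w2)
  have u2nz: "u2 \<noteq> 0" using a1 by auto
  have ne: "u1 \<noteq> u2" using a1 by auto
  have "u1 \<notin> span {u2}"
  proof
    assume "u1 \<in> span {u2}"
    then obtain c where "u1 = c *\<^sub>R u2" by (auto simp: span_singleton)
    then show False using a1 by simp
  qed
  moreover have "independent {u2}"
    using u2nz by (intro independent_insertI) (auto simp: independent_empty)
  ultimately have ind: "independent {u1, u2}" by (rule independent_insertI)
  have d2: "dim (span {u1, u2}) = 2"
    using dim_span_eq_card_independent[OF ind] ne by simp
  have Keq: "K = {Z \<in> UNIV. \<forall>x\<in>span {u1, u2}. orthogonal x Z}"
  proof -
    have "(\<forall>x\<in>span {u1, u2}. orthogonal x Z) \<longleftrightarrow> u1 \<bullet> Z = 0 \<and> u2 \<bullet> Z = 0" for Z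
    proof
      assume "\<forall>x\<in>span {u1, u2}. orthogonal x Z"
      then show "u1 \<bullet> Z = 0 \<and> u2 \<bullet> Z = 0"
        by (auto simp: orthogonal_def span_base)
    next
      assume a: "u1 \<bullet> Z = 0 \<and> u2 \<bullet> Z = 0"
      show "\<forall>x\<in>span {u1, u2}. orthogonal x Z"
      proof
        fix x assume "x \<in> span {u1, u2}"
        then have "orthogonal Z x"
          by (rule orthogonal_to_span) (use a in \<open>auto simp: orthogonal_def inner_commute\<close>)
        then show "orthogonal x Z" by (simp add: orthogonal_commute)
      qed
    qed
    then show ?thesis by (auto simp: K_def)
  qed
  have "dim K + dim (span {u1, u2}) = dim (UNIV :: 'n vert set)"
    unfolding Keq
    by (rule dim_subspace_orthogonal_to_vectors) (auto simp: subspace_span)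
  then have dimK: "dim K = 2 * CARD('n) - 2" using d2 by (simp add: dim_UNIV)
  show ?thesis
    using fV_in x1V f3 img dimK w1x1 fx1 w1f f2 by simp
qed
end
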